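(* Let $G=(V,E)$ be a finite connected undirected unweighted graph, let $\lambda\in[0,1]$, $r>0$, and $S\subseteq V$. If $r\ge 1$ then $\mathrm{fp}^{\lambda,r}_G(S)\ge \mathrm{fp}^{\lambda,1}_G(S)$, and if $r\le 1$ then $\mathrm{fp}^{\lambda,r}_G(S)\le \mathrm{fp}^{\lambda,1}_G(S)$.
   Context: The $\lambda$-mixed Moran process on a connected graph $G=(V,E)$ with $n=|V|\ge 2$ vertices: each vertex hosts either a resident (fitness $1$) or a mutant (fitness $r>0$); the state is the set $S_t\subseteq V$ of mutant vertices. $N(u)$ is the neighbor set of $u$. At each step, independently: with probability $\lambda$ a Birth-death step occurs (a vertex $u$ is chosen with probability proportional to its fitness among all vertices, then a uniformly random neighbor $v\in N(u)$ takes the type of $u$); with probability $1-\lambda$ a death-Birth step occurs (a uniformly random vertex $v$ dies, then a neighbor $u\in N(v)$ is chosen with probability proportional to fitness among $N(v)$, and $v$ takes the type of $u$). $\mathrm{fp}^{\lambda,r}_G(S)$ is the probability that, starting from $S_0=S$, the process reaches $S_t=V$. *)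

theory Defs
  imports Complex_Main
begin

definition connected_graph :: "'a set \<Rightarrow> ('a \<Rightarrow> 'a \<Rightarrow> bool) \<Rightarrow> bool" where
  "connected_graph V E \<longleftrightarrow> finite V \<and> card V \<ge> 2
     \<and> (\<forall>u v. E u v \<longrightarrow> u \<in> V \<and> v \<in> V)
     \<and> (\<forall>u v. E u v \<longrightarrow> E v u)
     \<and> (\<forall>u. \<not> E u u)
     \<and> (\<forall>u\<in>V. \<forall>v\<in>V. E\<^sup>*\<^sup>* u v)"

definition nbrs :: "'a set \<Rightarrow> ('a \<Rightarrow> 'a \<Rightarrow> bool) \<Rightarrow> 'a \<Rightarrow> 'a set" where
  "nbrs V E u = {v \<in> V. E u v}"

definition fit :: "real \<Rightarrow> 'a set \<Rightarrow> 'a \<Rightarrow> real" where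
  "fit r S u = (if u \<in> S then r else 1)"

text \<open>New mutant set after vertex v takes the type of vertex u.\<close>
definition moran_upd :: "'a set \<Rightarrow> 'a \<Rightarrow> 'a \<Rightarrow> 'a set" where
  "moran_upd S u v = (if u \<in> S then insert v S else S - {v})"

text \<open>Expected value of f after one step of the lambda-mixed Moran process from state S.\<close>
definition moran_step :: "'a set \<Rightarrow> ('a \<Rightarrow> 'a \<Rightarrow> bool) \<Rightarrow> real \<Rightarrow> real \<Rightarrow> ('a set \<Rightarrow> real) \<Rightarrow> 'a set \<Rightarrow> real" where
  "moran_step V E lam r f S =
     lam * (\<Sum>u\<in>V. fit r S u / (\<Sum>w\<in>V. fit r S w) *
              (\<Sum>v\<in>nbrs V E u. f (moran_upd S u v) / real (card (nbrs V E u))))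
   + (1 - lam) * (\<Sum>v\<in>V. (1 / real (card V)) *
              (\<Sum>u\<in>nbrs V E v. fit r S u / (\<Sum>w\<in>nbrs V E v. fit r S w) * f (moran_upd S u v)))"

text \<open>Probability that, starting from S, the process reaches the all-mutant state V within n steps.\<close>
fun hit_within :: "'a set \<Rightarrow> ('a \<Rightarrow> 'a \<Rightarrow> bool) \<Rightarrow> real \<Rightarrow> real \<Rightarrow> nat \<Rightarrow> 'a set \<Rightarrow> real" where
  "hit_within V E lam r 0 S = (if S = V then 1 else 0)"
| "hit_within V E lam r (Suc n) S =
     (if S = V then 1 else moran_step V E lam r (hit_within V E lam r n) S)"

definition fp :: "'a set \<Rightarrow> ('a \<Rightarrow> 'a \<Rightarrow> bool) \<Rightarrow> real \<Rightarrow> real \<Rightarrow> 'a set \<Rightarrow> real" where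
  "fp V E lam r S = lim (\<lambda>n. hit_within V E lam r n S)"

end

theory Submission imports Defs begin

lemma cheb:
  fixes f y :: "'b \<Rightarrow> real"
  assumes "finite N" and h: "\<forall>u\<in>N. \<forall>w\<in>N. 0 \<le> (f u - f w) * (y u - y w)"
  shows "(sum f N) * (sum y N) \<le> real (card N) * (\<Sum>u\<in>N. f u * y u)"
proof -
  have e1: "(\<Sum>u\<in>N. \<Sum>w\<in>N. f u * y u) = real (card N) * (\<Sum>u\<in>N. f u * y u)"
    by (simp add: sum.swap[of _ N N] sum_distrib_left)
  have e2: "(\<Sum>u\<in>N. \<Sum>w\<in>N. f w * y w) = real (card N) * (\<Sum>u\<in>N. f u * y u)"
    by simp
  have e3: "(\<Sum>u\<in>N. \<Sum>w\<in>N. f u * y w) = sum f N * sum y N"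
    by (rule sum_product[symmetric])
  have e4: "(\<Sum>u\<in>N. \<Sum>w\<in>N. f w * y u) = sum f N * sum y N"
    by (simp add: sum_distrib_left sum_distrib_right mult.commute)
  have "(\<Sum>u\<in>N. \<Sum>w\<in>N. (f u - f w) * (y u - y w))
      = (\<Sum>u\<in>N. \<Sum>w\<in>N. f u * y u) + (\<Sum>u\<in>N. \<Sum>w\<in>N. f w * y w)
        - (\<Sum>u\<in>N. \<Sum>w\<in>N. f u * y w) - (\<Sum>u\<in>N. \<Sum>w\<in>N. f w * y u)"
    by (simp add: algebra_simps sum.distrib sum_subtractf)
  moreover have "0 \<le> (\<Sum>u\<in>N. \<Sum>w\<in>N. (f u - f w) * (y u - y w))"
    using h by (intro sum_nonneg) auto
  ultimately show ?thesis using e1 e2 e3 e4 by linarith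
qed

lemma fit_pos: "0 < r \<Longrightarrow> 0 < fit r S u"
  by (simp add: fit_def)

lemma wavg:
  fixes y :: "'a \<Rightarrow> real"
  assumes N: "finite N" "N \<noteq> {}" and r: "0 < r"
    and h: "\<forall>u\<in>N. \<forall>w\<in>N. 0 \<le> s * ((fit r S u - fit r S w) * (y u - y w))"
  shows "0 \<le> s * ((\<Sum>u\<in>N. fit r S u / (\<Sum>w\<in>N. fit r S w) * y u)
                 - (\<Sum>u\<in>N. fit 1 S u / (\<Sum>w\<in>N. fit 1 S w) * y u))"
proof -
  define W where "W = (\<Sum>w\<in>N. fit r S w)"
  define n where "n = real (card N)"
  have W: "0 < W" unfolding W_def using N r by (intro sum_pos) (auto simp: fit_pos)
  have n: "0 < n" unfolding n_def using N by (simp add: card_gt_0_iff)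
  have c: "W * (\<Sum>u\<in>N. s * y u) \<le> n * (\<Sum>u\<in>N. fit r S u * (s * y u))"
    unfolding W_def n_def
    by (rule cheb[OF N(1)]) (use h in \<open>auto simp: algebra_simps\<close>)
  have f1: "fit 1 S u = 1" for u by (simp add: fit_def)
  have "s * ((\<Sum>u\<in>N. fit r S u / W * y u) - (\<Sum>u\<in>N. 1 / n * y u))
     = (n * (\<Sum>u\<in>N. fit r S u * (s * y u)) - W * (\<Sum>u\<in>N. s * y u)) / (W * n)"
    using W n by (simp add: field_simps sum_distrib_left sum_divide_distrib)
  also have "\<dots> \<ge> 0" using c W n by simp
  finally show ?thesis by (simp add: f1 W_def n_def)
qed


lemma cg_facts:
  assumes "connected_graph V E"
  shows "finite V" "V \<noteq> {}" "\<And>u. u \<in> V \<Longrightarrow> nbrs V E u \<noteq> {}"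
    "\<And>u. finite (nbrs V E u)" "\<And>u. nbrs V E u \<subseteq> V"
proof -
  show fV: "finite V" using assms by (simp add: connected_graph_def)
  have c2: "card V \<ge> 2" using assms by (simp add: connected_graph_def)
  then show "V \<noteq> {}" by auto
  show "nbrs V E u \<subseteq> V" for u by (auto simp: nbrs_def)
  then show "finite (nbrs V E u)" for u using fV by (meson finite_subset)
  show "nbrs V E u \<noteq> {}" if u: "u \<in> V" for u
  proof -
    have "card (V - {u}) \<ge> 1" using c2 u fV by (simp add: card_Diff_singleton)
    then obtain v where v: "v \<in> V" "v \<noteq> u"
      by (metis One_nat_def Diff_iff card_0_eq fV finite_Diff insertCI not_one_le_zero ex_in_conv)
    have "E\<^sup>*\<^sup>* u v" using assms u v by (simp add: connected_graph_def)
    then obtain w where "E u w" using v(2) by (metis converse_rtranclpE)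
    then have "w \<in> nbrs V E u" using assms by (auto simp: nbrs_def connected_graph_def)
    then show ?thesis by auto
  qed
qed

lemma upd_sub: "S \<subseteq> V \<Longrightarrow> v \<in> V \<Longrightarrow> moran_upd S u v \<subseteq> V"
  by (auto simp: moran_upd_def)

lemma step_mono_f:
  assumes G: "connected_graph V E" and l: "0 \<le> lam" "lam \<le> 1" and r: "0 < r"
    and S: "S \<subseteq> V" and fg: "\<And>T. T \<subseteq> V \<Longrightarrow> f T \<le> g T"
  shows "moran_step V E lam r f S \<le> moran_step V E lam r g S"
proof -
  note F = cg_facts[OF G]
  have W: "0 \<le> fit r S u / (\<Sum>w\<in>A. fit r S w)" for u A
    using r by (intro divide_nonneg_nonneg sum_nonneg) (auto intro: less_imp_le fit_pos)
  have u: "moran_upd S u v \<subseteq> V" if "v \<in> nbrs V E x" for u v x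
    using that F(5) S by (intro upd_sub) auto
  have u2: "moran_upd S u v \<subseteq> V" if "v \<in> V" for u v
    using that S by (intro upd_sub) auto
  show ?thesis
    unfolding moran_step_def
    apply (intro add_mono mult_left_mono sum_mono divide_right_mono)
    using l W u u2 fg by auto
qed

lemma step_one:
  assumes G: "connected_graph V E" and l: "0 \<le> lam" "lam \<le> 1" and r: "0 < r"
  shows "moran_step V E lam r (\<lambda>_. 1) S = 1"
proof -
  note F = cg_facts[OF G]
  have p: "0 < (\<Sum>w\<in>A. fit r S w)" if "finite A" "A \<noteq> {}" for A
    using r that by (intro sum_pos) (auto intro: fit_pos)
  have a: "(\<Sum>u\<in>V. fit r S u / (\<Sum>w\<in>V. fit r S w) *
              (\<Sum>v\<in>nbrs V E u. 1 / real (card (nbrs V E u)))) = 1"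
  proof -
    have "(\<Sum>u\<in>V. fit r S u / (\<Sum>w\<in>V. fit r S w) *
              (\<Sum>v\<in>nbrs V E u. 1 / real (card (nbrs V E u))))
        = (\<Sum>u\<in>V. fit r S u / (\<Sum>w\<in>V. fit r S w))"
      using F by (intro sum.cong) (auto simp: card_gt_0_iff)
    also have "\<dots> = 1" using p[OF F(1,2)] by (simp add: sum_divide_distrib[symmetric])
    finally show ?thesis .
  qed
  have b: "(\<Sum>v\<in>V. (1 / real (card V)) *
              (\<Sum>u\<in>nbrs V E v. fit r S u / (\<Sum>w\<in>nbrs V E v. fit r S w) * 1)) = 1"
  proof -
    have "(\<Sum>v\<in>V. (1 / real (card V)) *
              (\<Sum>u\<in>nbrs V E v. fit r S u / (\<Sum>w\<in>nbrs V E v. fit r S w) * 1))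
       = (\<Sum>v\<in>V. (1 / real (card V)))"
    proof (intro sum.cong refl)
      fix v assume "v \<in> V"
      then have "0 < (\<Sum>w\<in>nbrs V E v. fit r S w)" using F by (intro p) auto
      then show "(1 / real (card V)) *
              (\<Sum>u\<in>nbrs V E v. fit r S u / (\<Sum>w\<in>nbrs V E v. fit r S w) * 1) = 1 / real (card V)"
        by (simp add: sum_divide_distrib[symmetric])
    qed
    also have "\<dots> = 1" using F by (simp add: card_gt_0_iff)
    finally show ?thesis .
  qed
  show ?thesis unfolding moran_step_def using a b by simp
qed


lemma hw_bounds:
  assumes G: "connected_graph V E" and l: "0 \<le> lam" "lam \<le> 1" and r: "0 < r"
  shows "S \<subseteq> V \<Longrightarrow> 0 \<le> hit_within V E lam r n S \<and> hit_within V E lam r n S \<le> 1"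
proof (induction n arbitrary: S)
  case 0 then show ?case by simp
next
  case (Suc n)
  have lo: "moran_step V E lam r (\<lambda>_. 0) S \<le> moran_step V E lam r (hit_within V E lam r n) S"
    by (rule step_mono_f[OF G l r Suc.prems]) (use Suc.IH in auto)
  have hi: "moran_step V E lam r (hit_within V E lam r n) S \<le> moran_step V E lam r (\<lambda>_. 1) S"
    by (rule step_mono_f[OF G l r Suc.prems]) (use Suc.IH in auto)
  have z: "moran_step V E lam r (\<lambda>_. 0) S = 0" by (simp add: moran_step_def)
  show ?case using lo hi z step_one[OF G l r, of S] by simp
qed

lemma hw_inc:
  assumes G: "connected_graph V E" and l: "0 \<le> lam" "lam \<le> 1" and r: "0 < r"
  shows "S \<subseteq> V \<Longrightarrow> hit_within V E lam r n S \<le> hit_within V E lam r (Suc n) S"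
proof (induction n arbitrary: S)
  case 0
  have "moran_step V E lam r (\<lambda>_. 0) S \<le> moran_step V E lam r (hit_within V E lam r 0) S"
    by (rule step_mono_f[OF G l r 0]) auto
  moreover have z: "moran_step V E lam r (\<lambda>_. 0) S = 0" by (simp add: moran_step_def)
  ultimately show ?case by simp
next
  case (Suc n)
  have "moran_step V E lam r (hit_within V E lam r n) S \<le> moran_step V E lam r (hit_within V E lam r (Suc n)) S"
    by (rule step_mono_f[OF G l r Suc.prems]) (use Suc.IH in auto)
  then show ?case by simp
qed

lemma hw_conv:
  assumes G: "connected_graph V E" and l: "0 \<le> lam" "lam \<le> 1" and r: "0 < r" and S: "S \<subseteq> V"
  shows "(\<lambda>n. hit_within V E lam r n S) \<longlonglongrightarrow> fp V E lam r S"
proof -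
  have i: "incseq (\<lambda>n. hit_within V E lam r n S)"
    using hw_inc[OF G l r S] by (simp add: incseq_SucI)
  have b: "\<forall>n. hit_within V E lam r n S \<le> 1" using hw_bounds[OF G l r S] by auto
  obtain L where "(\<lambda>n. hit_within V E lam r n S) \<longlonglongrightarrow> L"
    using incseq_convergent[OF i b] by blast
  then have "convergent (\<lambda>n. hit_within V E lam r n S)" by (auto simp: convergent_def)
  then show ?thesis unfolding fp_def by (simp add: convergent_LIMSEQ_iff)
qed

lemma upd_mono: "S \<subseteq> T \<Longrightarrow> moran_upd S u v \<subseteq> moran_upd T u v"
  by (auto simp: moran_upd_def)

lemma step1_mono_S:
  assumes G: "connected_graph V E" and l: "0 \<le> lam" "lam \<le> 1"
    and ST: "S \<subseteq> T" "T \<subseteq> V" and gm: "\<And>A B. A \<subseteq> B \<Longrightarrow> B \<subseteq> V \<Longrightarrow> g A \<le> g B"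
  shows "moran_step V E lam 1 g S \<le> moran_step V E lam 1 g T"
proof -
  note F = cg_facts[OF G]
  have f1: "fit 1 X u = 1" for X u by (simp add: fit_def)
  have u: "g (moran_upd S u v) \<le> g (moran_upd T u v)" if "v \<in> V" for u v
    using that ST by (intro gm upd_mono upd_sub) auto
  have u': "g (moran_upd S u v) \<le> g (moran_upd T u v)" if "v \<in> nbrs V E x" for u v x
    using that F(5) u by auto
  show ?thesis
    unfolding moran_step_def f1
    apply (intro add_mono mult_left_mono sum_mono divide_right_mono)
    using l u u' by auto
qed

lemma hw1_mono:
  assumes G: "connected_graph V E" and l: "0 \<le> lam" "lam \<le> 1"
  shows "S \<subseteq> T \<Longrightarrow> T \<subseteq> V \<Longrightarrow> hit_within V E lam 1 n S \<le> hit_within V E lam 1 n T"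
proof (induction n arbitrary: S T)
  case 0 then show ?case by auto
next
  case (Suc n)
  show ?case
  proof (cases "T = V")
    case True
    then show ?thesis using hw_bounds[OF G l, of 1 S "Suc n"] Suc.prems by auto
  next
    case False
    then have "S \<noteq> V" using Suc.prems by auto
    moreover have "moran_step V E lam 1 (hit_within V E lam 1 n) S \<le> moran_step V E lam 1 (hit_within V E lam 1 n) T"
      by (rule step1_mono_S[OF G l Suc.prems]) (use Suc.IH in auto)
    ultimately show ?thesis using False by simp
  qed
qed


lemma step_cmp:
  assumes G: "connected_graph V E" and l: "0 \<le> lam" "lam \<le> 1" and r: "0 < r"
    and S: "S \<subseteq> V" and gm: "\<And>A B. A \<subseteq> B \<Longrightarrow> B \<subseteq> V \<Longrightarrow> g A \<le> g B"
    and s: "0 \<le> s * (r - 1)"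
  shows "0 \<le> s * (moran_step V E lam r g S - moran_step V E lam 1 g S)"
proof -
  note F = cg_facts[OF G]
  define A where "A u = (\<Sum>v\<in>nbrs V E u. g (moran_upd S u v) / real (card (nbrs V E u)))" for u
  have avg_ge: "c \<le> (\<Sum>v\<in>N. x v / real (card N))"
    if "finite N" "N \<noteq> {}" "\<And>v. v \<in> N \<Longrightarrow> c \<le> x v" for N c and x :: "'a \<Rightarrow> real"
  proof -
    have "(\<Sum>v\<in>N. c / real (card N)) \<le> (\<Sum>v\<in>N. x v / real (card N))"
      using that by (intro sum_mono divide_right_mono) auto
    moreover have "(\<Sum>v\<in>N. c / real (card N)) = c" using that by (simp add: card_gt_0_iff)
    ultimately show ?thesis by simp
  qed
  have avg_le: "(\<Sum>v\<in>N. x v / real (card N)) \<le> c"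
    if "finite N" "N \<noteq> {}" "\<And>v. v \<in> N \<Longrightarrow> x v \<le> c" for N c and x :: "'a \<Rightarrow> real"
  proof -
    have "(\<Sum>v\<in>N. x v / real (card N)) \<le> (\<Sum>v\<in>N. c / real (card N))"
      using that by (intro sum_mono divide_right_mono) auto
    moreover have "(\<Sum>v\<in>N. c / real (card N)) = c" using that by (simp add: card_gt_0_iff)
    ultimately show ?thesis by simp
  qed
  have Ain: "g S \<le> A u" if "u \<in> V" "u \<in> S" for u
    unfolding A_def using that F S
    by (intro avg_ge) (auto intro!: gm simp: moran_upd_def)
  have Aout: "A u \<le> g S" if "u \<in> V" "u \<notin> S" for u
    unfolding A_def using that F S
    by (intro avg_le) (auto intro!: gm simp: moran_upd_def)
  have key: "0 \<le> s * ((fit r S u - fit r S w) * (y u - y w))"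
    if "u \<in> S \<Longrightarrow> w \<notin> S \<Longrightarrow> y w \<le> y u" "w \<in> S \<Longrightarrow> u \<notin> S \<Longrightarrow> y u \<le> y w"
    for u w and y :: "'a \<Rightarrow> real"
  proof (cases "u \<in> S \<longleftrightarrow> w \<in> S")
    case True then show ?thesis by (auto simp: fit_def)
  next
    case False
    then show ?thesis
    proof (cases "u \<in> S")
      case True
      then have "s * ((fit r S u - fit r S w) * (y u - y w)) = (s * (r - 1)) * (y u - y w)"
        using False by (simp add: fit_def)
      also have "\<dots> \<ge> 0" using s that True False by (intro mult_nonneg_nonneg[of "s * (r - 1)"]) auto
      finally show ?thesis .
    next
      case f2: False
      then have "s * ((fit r S u - fit r S w) * (y u - y w)) = (s * (r - 1)) * (y w - y u)"
        using False by (simp add: fit_def algebra_simps)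
      also have "\<dots> \<ge> 0" using s that f2 False by (intro mult_nonneg_nonneg[of "s * (r - 1)"]) auto
      finally show ?thesis .
    qed
  qed
  have Bd: "0 \<le> s * ((\<Sum>u\<in>V. fit r S u / (\<Sum>w\<in>V. fit r S w) * A u)
                 - (\<Sum>u\<in>V. fit 1 S u / (\<Sum>w\<in>V. fit 1 S w) * A u))"
    using F(1,2) r by (rule wavg) (use Ain Aout in \<open>force intro!: key\<close>)
  have dB: "0 \<le> s * ((\<Sum>u\<in>nbrs V E v. fit r S u / (\<Sum>w\<in>nbrs V E v. fit r S w) * g (moran_upd S u v))
                 - (\<Sum>u\<in>nbrs V E v. fit 1 S u / (\<Sum>w\<in>nbrs V E v. fit 1 S w) * g (moran_upd S u v)))"
    if v: "v \<in> V" for v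
    using F(4) F(3)[OF v] r
  proof (rule wavg)
    have "g (S - {v}) \<le> g (insert v S)" using v S by (intro gm) auto
    then show "\<forall>u\<in>nbrs V E v. \<forall>w\<in>nbrs V E v. 0 \<le> s * ((fit r S u - fit r S w)
          * (g (moran_upd S u v) - g (moran_upd S w v)))"
      by (intro ballI key) (auto simp: moran_upd_def)
  qed
  define X1 where "X1 = (\<Sum>u\<in>V. fit r S u / (\<Sum>w\<in>V. fit r S w) * A u)
                 - (\<Sum>u\<in>V. fit 1 S u / (\<Sum>w\<in>V. fit 1 S w) * A u)"
  define X2 where "X2 = (\<Sum>v\<in>V. (1 / real (card V)) * (s * ((\<Sum>u\<in>nbrs V E v. fit r S u / (\<Sum>w\<in>nbrs V E v. fit r S w) * g (moran_upd S u v))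
                 - (\<Sum>u\<in>nbrs V E v. fit 1 S u / (\<Sum>w\<in>nbrs V E v. fit 1 S w) * g (moran_upd S u v)))))"
  have X2: "0 \<le> X2" unfolding X2_def using dB by (intro sum_nonneg mult_nonneg_nonneg[of "1 / real (card V)"]) auto
  have "s * (moran_step V E lam r g S - moran_step V E lam 1 g S) = lam * (s * X1) + (1 - lam) * X2"
    unfolding moran_step_def X1_def X2_def A_def
    by (simp add: algebra_simps sum_subtractf sum_distrib_left sum_divide_distrib)
  also have "\<dots> \<ge> 0" using Bd X2 l unfolding X1_def[symmetric] by simp
  finally show ?thesis .
qed


lemma hw_cmp:
  assumes G: "connected_graph V E" and l: "0 \<le> lam" "lam \<le> 1" and r: "0 < r"
    and s: "s = 1 \<or> s = -1" and sr: "0 \<le> s * (r - 1)"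
  shows "S \<subseteq> V \<Longrightarrow> 0 \<le> s * (hit_within V E lam r n S - hit_within V E lam 1 n S)"
proof (induction n arbitrary: S)
  case 0 then show ?case by simp
next
  case (Suc n)
  show ?case
  proof (cases "S = V")
    case True then show ?thesis by simp
  next
    case False
    have gm: "\<And>A B. A \<subseteq> B \<Longrightarrow> B \<subseteq> V \<Longrightarrow> hit_within V E lam 1 n A \<le> hit_within V E lam 1 n B"
      by (rule hw1_mono[OF G l])
    have c: "0 \<le> s * (moran_step V E lam r (hit_within V E lam 1 n) S
                    - moran_step V E lam 1 (hit_within V E lam 1 n) S)"
      by (rule step_cmp[OF G l r Suc.prems gm sr])
    have d: "0 \<le> s * (moran_step V E lam r (hit_within V E lam r n) S
                    - moran_step V E lam r (hit_within V E lam 1 n) S)"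
    proof (cases "s = 1")
      case True
      have "moran_step V E lam r (hit_within V E lam 1 n) S \<le> moran_step V E lam r (hit_within V E lam r n) S"
        by (rule step_mono_f[OF G l r Suc.prems]) (use Suc.IH True in force)
      then show ?thesis using True by simp
    next
      case False
      then have s1: "s = -1" using s by simp
      have "moran_step V E lam r (hit_within V E lam r n) S \<le> moran_step V E lam r (hit_within V E lam 1 n) S"
        by (rule step_mono_f[OF G l r Suc.prems]) (use Suc.IH s1 in force)
      then show ?thesis using s1 by simp
    qed
    have "s * (hit_within V E lam r (Suc n) S - hit_within V E lam 1 (Suc n) S)
       = s * (moran_step V E lam r (hit_within V E lam r n) S
                    - moran_step V E lam r (hit_within V E lam 1 n) S)
         + s * (moran_step V E lam r (hit_within V E lam 1 n) S
                    - moran_step V E lam 1 (hit_within V E lam 1 n) S)"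
      using False by (simp add: algebra_simps)
    then show ?thesis using c d by simp
  qed
qed

theorem mainTheorem2:
  fixes V :: "'a set" and E :: "'a \<Rightarrow> 'a \<Rightarrow> bool" and lam r :: real and S :: "'a set"
  assumes "connected_graph V E" and "0 \<le> lam" and "lam \<le> 1" and "r > 0" and "S \<subseteq> V"
  shows "(r \<ge> 1 \<longrightarrow> fp V E lam r S \<ge> fp V E lam 1 S)
       \<and> (r \<le> 1 \<longrightarrow> fp V E lam r S \<le> fp V E lam 1 S)"
proof -
  note G = assms(1) and l = assms(2,3) and r = assms(4) and S = assms(5)
  have Lr: "(\<lambda>n. hit_within V E lam r n S) \<longlonglongrightarrow> fp V E lam r S" by (rule hw_conv[OF G l r S])
  have L1: "(\<lambda>n. hit_within V E lam 1 n S) \<longlonglongrightarrow> fp V E lam 1 S" by (rule hw_conv[OF G l _ S]) simp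
  show ?thesis
  proof (intro conjI impI)
    assume "1 \<le> r"
    then have "\<And>n. 0 \<le> 1 * (hit_within V E lam r n S - hit_within V E lam 1 n S)"
      by (intro hw_cmp[OF G l r _ _ S]) auto
    then show "fp V E lam 1 S \<le> fp V E lam r S"
      by (intro LIMSEQ_le[OF L1 Lr]) auto
  next
    assume "r \<le> 1"
    then have "\<And>n. 0 \<le> (-1) * (hit_within V E lam r n S - hit_within V E lam 1 n S)"
      by (intro hw_cmp[OF G l r _ _ S]) auto
    then show "fp V E lam r S \<le> fp V E lam 1 S"
      by (intro LIMSEQ_le[OF Lr L1]) auto
  qed
qed

end
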